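(* For integers $0\le k\le n$, \[ S_B[n,k]=\sum_{j=k}^n\binom{n}{j}[2]_q^{\,j-k}q^{\,j-k}\,S[j,k]_{q^2} \] and \[ S_B[n,k]=S_D[n,k]+n\cdot[2]_q^{\,n-k-1}q^{\,n-k-1}\,S[n-1,k]_{q^2} \] (when $n=0$ the last summand is $0$ because of the factor $n$).
   Context: $[k]_q=1+\dots+q^{k-1}$, $[0]_q=0$. Carlitz's $q$-Stirling numbers $S[n,k]$: $S[0,k]=\delta_{0k}$, $S[n,k]=S[n-1,k-1]+[k]_qS[n-1,k]$ for $n\ge1$; $S[n,k]_{q^2}$ is $S[n,k]$ with $q$ replaced by $q^2$ (and $S[n,k]=0$ for $k>n$ or $k<0$). $S_B[n,k]$: $S_B[0,k]=\delta_{0k}$, $S_B[n,k]=S_B[n-1,k-1]+[2k+1]_qS_B[n-1,k]$. For $S\subset\mathbb{Z}\setminus\{0\}$, $\overline{S}=\{-i:i\in S\}$, a standard signed partition (SSP) of $S$ with $k$ blocks is a sequence $(S_1,\dots,S_k)$ of disjoint nonempty subsets of $S\cup\overline{S}$ with $\{S_1,\dots,S_k,\overline{S_1},\dots,\overline{S_k}\}$ a partition of $S\cup\overline{S}$ and $\min|S_1|\le\dots\le\min|S_k|$ ($|S_i|=\{|j|:j\in S_i\}$). A PSSP of $S$ is an SSP of a (possibly empty) subset of $S$. $B(S,k)$, $B_{\subseteq}(S,k)$ are the sets of SSPs, PSSPs of $S$ with $k$ blocks, and $D_{\subseteq}([n],k)=B_{\subseteq}([n],k)\setminus\bigcup_{i=1}^nB([n]\setminus\{i\},k)$.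 For $\pi=(S_1,\dots,S_k)$, $\mathrm{pos}(\pi)=\#\{x\in\bigcup_iS_i:x>0\}$, $m(\pi)=2\sum_{i=1}^ki\cdot\#S_i-\mathrm{pos}(\pi)$. The type D $q$-Stirling numbers are $S_D[n,k]=\frac{1}{q^{k^2}[2]_q^k}\sum_{\pi\in D_{\subseteq}([n],k)}q^{m(\pi)}$. *)

theory Defs
  imports Main
begin

definition qint :: "'a::comm_ring_1 \<Rightarrow> nat \<Rightarrow> 'a" where
  "qint q k = (\<Sum>i<k. q ^ i)"

fun qStirling :: "'a::comm_ring_1 \<Rightarrow> nat \<Rightarrow> nat \<Rightarrow> 'a" where
  "qStirling q 0 k = (if k = 0 then 1 else 0)"
| "qStirling q (Suc n) 0 = qint q 0 * qStirling q n 0"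
| "qStirling q (Suc n) (Suc k) = qStirling q n k + qint q (Suc k) * qStirling q n (Suc k)"

fun qStirlingB :: "'a::comm_ring_1 \<Rightarrow> nat \<Rightarrow> nat \<Rightarrow> 'a" where
  "qStirlingB q 0 k = (if k = 0 then 1 else 0)"
| "qStirlingB q (Suc n) 0 = qint q 1 * qStirlingB q n 0"
| "qStirlingB q (Suc n) (Suc k) = qStirlingB q n k + qint q (2 * Suc k + 1) * qStirlingB q n (Suc k)"

definition negset :: "int set \<Rightarrow> int set" where
  "negset A = uminus ` A"

text \<open>A standard signed partition of S with k blocks, represented as the list
  [S_1, ..., S_k].\<close>
definition SSP :: "int set \<Rightarrow> nat \<Rightarrow> int set list \<Rightarrow> bool" where
  "SSP S k \<pi> \<longleftrightarrow>
     length \<pi> = k \<and>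
     (\<forall>i<k. \<pi> ! i \<noteq> {}) \<and>
     (\<forall>i<k. \<forall>j<k. i \<noteq> j \<longrightarrow> \<pi> ! i \<inter> \<pi> ! j = {}) \<and>
     (\<forall>i<k. \<forall>j<k. \<pi> ! i \<inter> negset (\<pi> ! j) = {}) \<and>
     (\<Union>i<k. \<pi> ! i \<union> negset (\<pi> ! i)) = S \<union> negset S \<and>
     (\<forall>i j. i \<le> j \<and> j < k \<longrightarrow> Min (abs ` (\<pi> ! i)) \<le> Min (abs ` (\<pi> ! j)))"

definition Bset :: "int set \<Rightarrow> nat \<Rightarrow> int set list set" where
  "Bset S k = {\<pi>. SSP S k \<pi>}"

definition Bsub :: "int set \<Rightarrow> nat \<Rightarrow> int set list set" where
  "Bsub S k = (\<Union>T\<in>Pow S. Bset T k)"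

definition Dsub :: "nat \<Rightarrow> nat \<Rightarrow> int set list set" where
  "Dsub n k = Bsub {1..int n} k - (\<Union>i\<in>{1..int n}. Bset ({1..int n} - {i}) k)"

definition pos :: "int set list \<Rightarrow> nat" where
  "pos \<pi> = card {x \<in> \<Union>(set \<pi>). x > 0}"

text \<open>m(\<pi>) = 2 * sum_{i=1}^k i * #S_i - pos(\<pi>) (this quantity is never negative).\<close>
definition mstat :: "int set list \<Rightarrow> nat" where
  "mstat \<pi> = 2 * (\<Sum>i<length \<pi>. (i + 1) * card (\<pi> ! i)) - pos \<pi>"

definition qStirlingD :: "'a::field \<Rightarrow> nat \<Rightarrow> nat \<Rightarrow> 'a" where
  "qStirlingD q n k = (\<Sum>\<pi>\<in>Dsub n k. q ^ mstat \<pi>) / (q ^ (k\<^sup>2) * qint q 2 ^ k)"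

end

theory Submission
  imports Defs
begin


lemma qStirling_zero: "j < k \<Longrightarrow> qStirling q j k = 0"
proof (induction j arbitrary: k)
  case 0 then show ?case by simp
next
  case (Suc j) then show ?case by (cases k) auto
qed

lemma qint2: "qint q 2 = 1 + q"
  by (simp add: qint_def numeral_2_eq_2)

lemma qint1: "qint q 1 = 1" by (simp add: qint_def)
lemma qint1': "qint q (Suc 0) = 1" by (simp add: qint_def)

lemma qint_odd: "qint q (2 * k + 1) = 1 + (qint q 2 * q) * qint (q^2) k"
proof (induction k)
  case 0 then show ?case by (simp add: qint_def)
next
  case (Suc k)
  have "qint q (2 * Suc k + 1) = qint q (2 * k + 1) + q^(2*k+1) + q^(2*k+2)"
    by (simp add: qint_def)
  also have "\<dots> = 1 + (qint q 2 * q) * qint (q^2) (Suc k)"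
    using Suc by (simp add: qint2) (simp add: qint_def algebra_simps power_mult[symmetric] power_add)
  finally show ?case .
qed

definition hh :: "'a::comm_ring_1 \<Rightarrow> nat \<Rightarrow> nat \<Rightarrow> 'a" where
  "hh q j k = (qint q 2 * q) ^ (j - k) * qStirling (q^2) j k"

lemma hh_0: "hh q 0 k = (if k = 0 then 1 else 0)"
  by (simp add: hh_def)

lemma hh_Suc_0: "hh q (Suc m) 0 = 0"
  by (simp add: hh_def qint_def)

lemma hh_Suc_Suc: "hh q (Suc m) (Suc k) = hh q m k + (qint q 2 * q) * qint (q^2) (Suc k) * hh q m (Suc k)"
proof (cases "Suc k \<le> m")
  case True
  then have e: "m - k = Suc (m - Suc k)" by simp
  show ?thesis unfolding hh_def by (simp add: e algebra_simps)
next
  case False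
  then show ?thesis unfolding hh_def by (simp add: qStirling_zero)
qed

lemma SB0: "qStirlingB q n 0 = 1"
  by (induction n) (auto simp: qint1')

lemma part1_gen: "qStirlingB q n k = (\<Sum>j\<le>n. of_nat (n choose j) * hh q j k)"
proof (induction n arbitrary: k)
  case 0 then show ?case by (simp add: hh_0)
next
  case (Suc n)
  show ?case
  proof (cases k)
    case 0
    then show ?thesis
      by (simp add: SB0 sum.atMost_Suc_shift hh_0 hh_Suc_0 del: sum.atMost_Suc)
  next
    case (Suc k')
    let ?a = "(qint q 2 * q) * qint (q^2) (Suc k')"
    define T where "T k = (\<Sum>j\<le>n. of_nat (n choose j) * hh q j k)" for k
    have e1: "T (Suc k') = (\<Sum>j\<le>n. of_nat (n choose Suc j) * hh q (Suc j) (Suc k'))"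
    proof -
      have "T (Suc k') = (\<Sum>j\<le>Suc n. of_nat (n choose j) * hh q j (Suc k'))"
        by (simp add: T_def binomial_eq_0)
      also have "\<dots> = (\<Sum>j\<le>n. of_nat (n choose Suc j) * hh q (Suc j) (Suc k'))"
        by (subst sum.atMost_Suc_shift) (simp add: hh_0)
      finally show ?thesis .
    qed
    have "(\<Sum>j\<le>Suc n. of_nat (Suc n choose j) * hh q j k)
        = (\<Sum>j\<le>n. of_nat (Suc n choose Suc j) * hh q (Suc j) (Suc k'))"
      by (subst sum.atMost_Suc_shift) (simp add: hh_0 Suc)
    also have "\<dots> = (\<Sum>j\<le>n. of_nat (n choose j) * hh q (Suc j) (Suc k'))
                   + (\<Sum>j\<le>n. of_nat (n choose Suc j) * hh q (Suc j) (Suc k'))"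
      by (simp add: sum.distrib algebra_simps)
    also have "(\<Sum>j\<le>n. of_nat (n choose j) * hh q (Suc j) (Suc k')) = T k' + ?a * T (Suc k')"
      by (simp add: T_def hh_Suc_Suc sum.distrib sum_distrib_left algebra_simps)
    finally have "(\<Sum>j\<le>Suc n. of_nat (Suc n choose j) * hh q j k) = T k' + (1 + ?a) * T (Suc k')"
      using e1 by (simp add: algebra_simps)
    moreover have "qStirlingB q (Suc n) k = T k' + (1 + ?a) * T (Suc k')"
      using Suc.IH by (simp add: Suc T_def qint_odd[of q "Suc k'", simplified])
    ultimately show ?thesis by simp
  qed
qed



lemma negset_iff [simp]: "x \<in> negset A \<longleftrightarrow> - x \<in> A"
  unfolding negset_def by (metis image_eqI imageE minus_minus)

lemma abs_negset: "abs ` (A \<union> negset A) = abs ` (A::int set)"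
proof -
  have "abs ` negset A = abs ` A" unfolding negset_def image_image by simp
  then show ?thesis by (simp add: image_Un)
qed

lemma abs_pos_set: "S \<subseteq> {0<..} \<Longrightarrow> abs ` (S::int set) = S"
proof -
  assume "S \<subseteq> {0<..}"
  then have "\<forall>x\<in>S. abs x = x" by auto
  then show ?thesis by (simp add: image_cong)
qed

definition SSP' :: "int set \<Rightarrow> nat \<Rightarrow> int set list \<Rightarrow> bool" where
  "SSP' S k \<pi> \<longleftrightarrow>
     length \<pi> = k \<and>
     (\<forall>i<k. \<pi> ! i \<noteq> {}) \<and>
     (\<forall>i<k. \<forall>j<k. \<forall>x\<in>\<pi>!i. \<forall>y\<in>\<pi>!j. \<bar>x\<bar> = \<bar>y\<bar> \<longrightarrow> i = j \<and> x = y) \<and>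
     (\<Union>i<k. abs ` (\<pi> ! i)) = S \<and>
     (\<forall>i j. i \<le> j \<and> j < k \<longrightarrow> Min (abs ` (\<pi> ! i)) \<le> Min (abs ` (\<pi> ! j)))"

lemma abs_cases_int: "\<bar>x::int\<bar> = \<bar>y\<bar> \<Longrightarrow> x = y \<or> x = - y"
  by arith

lemma SSP_iff:
  assumes S: "S \<subseteq> {0<..}"
  shows "SSP S k \<pi> \<longleftrightarrow> SSP' S k \<pi>"
proof
  assume H: "SSP S k \<pi>"
  have d: "\<forall>i<k. \<forall>j<k. \<forall>x\<in>\<pi>!i. \<forall>y\<in>\<pi>!j. \<bar>x\<bar> = \<bar>y\<bar> \<longrightarrow> i = j \<and> x = y"
  proof (intro allI impI ballI)
    fix i j x y assume ij: "i < k" "j < k" and xy: "x \<in> \<pi>!i" "y \<in> \<pi>!j" "\<bar>x\<bar> = \<bar>y\<bar>"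
    from abs_cases_int[OF xy(3)] show "i = j \<and> x = y"
    proof
      assume "x = y"
      with H ij xy show ?thesis unfolding SSP_def by blast
    next
      assume "x = - y"
      with H ij xy have "x \<in> \<pi>!i \<inter> negset (\<pi>!j)" by simp
      with H ij show ?thesis unfolding SSP_def by blast
    qed
  qed
  have u: "(\<Union>i<k. \<pi> ! i \<union> negset (\<pi> ! i)) = S \<union> negset S" using H by (simp add: SSP_def)
  have "(\<Union>i<k. abs ` (\<pi> ! i)) = abs ` (\<Union>i<k. \<pi> ! i \<union> negset (\<pi> ! i))"
    by (simp add: image_UN abs_negset)
  also have "\<dots> = S" unfolding u using S
    by (simp add: abs_negset abs_pos_set)
  finally show "SSP' S k \<pi>" using H d by (simp add: SSP_def SSP'_def)
next
  assume H: "SSP' S k \<pi>"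
  have d: "\<And>i j x y. i<k \<Longrightarrow> j<k \<Longrightarrow> x\<in>\<pi>!i \<Longrightarrow> y\<in>\<pi>!j \<Longrightarrow> \<bar>x\<bar> = \<bar>y\<bar> \<Longrightarrow> i = j \<and> x = y"
    using H unfolding SSP'_def by blast
  have u: "(\<Union>i<k. abs ` (\<pi> ! i)) = S" using H by (simp add: SSP'_def)
  have pos: "\<And>i x. i < k \<Longrightarrow> x \<in> \<pi>!i \<Longrightarrow> \<bar>x\<bar> \<in> S" using u by blast
  have c3: "\<forall>i<k. \<forall>j<k. i \<noteq> j \<longrightarrow> \<pi> ! i \<inter> \<pi> ! j = {}"
    using d by blast
  have c4: "\<forall>i<k. \<forall>j<k. \<pi> ! i \<inter> negset (\<pi> ! j) = {}"
  proof (intro allI impI)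
    fix i j assume ij: "i < k" "j < k"
    show "\<pi> ! i \<inter> negset (\<pi> ! j) = {}"
    proof (rule ccontr)
      assume "\<pi> ! i \<inter> negset (\<pi> ! j) \<noteq> {}"
      then obtain x where x: "x \<in> \<pi>!i" "-x \<in> \<pi>!j" by auto
      from d[OF ij x] have "x = 0" by simp
      with pos[OF ij(1) x(1)] S show False by auto
    qed
  qed
  have c5: "(\<Union>i<k. \<pi> ! i \<union> negset (\<pi> ! i)) = S \<union> negset S"
  proof
    show "(\<Union>i<k. \<pi> ! i \<union> negset (\<pi> ! i)) \<subseteq> S \<union> negset S"
    proof
      fix x assume "x \<in> (\<Union>i<k. \<pi> ! i \<union> negset (\<pi> ! i))"
      then obtain i where i: "i < k" "x \<in> \<pi>!i \<or> -x \<in> \<pi>!i" by auto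
      then have "\<bar>x\<bar> \<in> S" using pos by (metis abs_minus_cancel)
      then show "x \<in> S \<union> negset S" by (cases "x \<ge> 0") auto
    qed
  next
    show "S \<union> negset S \<subseteq> (\<Union>i<k. \<pi> ! i \<union> negset (\<pi> ! i))"
    proof
      fix x assume x: "x \<in> S \<union> negset S"
      then have "\<bar>x\<bar> \<in> S" using S by (cases "x \<ge> 0") auto
      then obtain i y where iy: "i < k" "y \<in> \<pi>!i" "\<bar>y\<bar> = \<bar>x\<bar>" using u by force
      then have "y = x \<or> y = -x" by arith
      with iy show "x \<in> (\<Union>i<k. \<pi> ! i \<union> negset (\<pi> ! i))" by auto
    qed
  qed
  show "SSP S k \<pi>" using H c3 c4 c5 by (simp add: SSP_def SSP'_def)
qed



lemma fin_abs_set: "finite (T::int set) \<Longrightarrow> finite {y. \<bar>y\<bar> \<in> T}"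
proof -
  assume "finite T"
  moreover have "{y. \<bar>y\<bar> \<in> T} \<subseteq> T \<union> uminus ` T"
  proof
    fix y assume "y \<in> {y. \<bar>y\<bar> \<in> T}"
    then show "y \<in> T \<union> uminus ` T" by (cases "y \<ge> 0") (auto intro: image_eqI[of _ _ "-y"])
  qed
  ultimately show ?thesis by (meson finite_Un finite_imageI finite_subset)
qed

lemma SSP'_abs: "SSP' T k \<pi> \<Longrightarrow> i < k \<Longrightarrow> y \<in> \<pi>!i \<Longrightarrow> \<bar>y\<bar> \<in> T"
  unfolding SSP'_def by blast

lemma SSP'_fin: "finite T \<Longrightarrow> SSP' T k \<pi> \<Longrightarrow> i < k \<Longrightarrow> finite (\<pi>!i)"
  by (rule finite_subset[OF _ fin_abs_set[of T]]) (auto dest: SSP'_abs)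

lemma Min_insert_big: "finite (B::int set) \<Longrightarrow> B \<noteq> {} \<Longrightarrow> \<forall>b\<in>B. b < m \<Longrightarrow> Min (insert m B) = Min B"
proof -
  assume a: "finite B" "B \<noteq> {}" "\<forall>b\<in>B. b < m"
  then have "Min B < m" using Min_in[of B] by blast
  then show ?thesis using a by (simp add: Min_insert)
qed

context
  fixes T' :: "int set" and m :: int and x :: int
  assumes fin: "finite T'" and posT: "T' \<subseteq> {0<..}" and mbig: "\<forall>y\<in>T'. y < m"
    and xm: "\<bar>x\<bar> = m"
begin

lemma m_notin: "m \<notin> T'" using mbig by auto

lemma lemA:
  assumes H: "SSP' T' k \<pi>'"
  shows "SSP' (insert m T') (Suc k) (\<pi>' @ [{x}])"
proof -
  let ?p = "\<pi>' @ [{x}]"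
  have len: "length \<pi>' = k" using H by (simp add: SSP'_def)
  have nth: "\<And>i. i < Suc k \<Longrightarrow> ?p ! i = (if i < k then \<pi>'!i else {x})"
    using len by (auto simp: nth_append)
  have ne: "\<forall>i<Suc k. ?p ! i \<noteq> {}"
    using H nth by (auto simp: SSP'_def less_Suc_eq)
  have ab: "\<And>i y. i < k \<Longrightarrow> y \<in> \<pi>'!i \<Longrightarrow> \<bar>y\<bar> < m"
    using H mbig by (auto dest: SSP'_abs)
  have d: "\<forall>i<Suc k. \<forall>j<Suc k. \<forall>a\<in>?p!i. \<forall>b\<in>?p!j. \<bar>a\<bar> = \<bar>b\<bar> \<longrightarrow> i = j \<and> a = b"
  proof (intro allI impI ballI)
    fix i j a b assume ij: "i < Suc k" "j < Suc k" and ab': "a \<in> ?p!i" "b \<in> ?p!j" "\<bar>a\<bar> = \<bar>b\<bar>"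
    show "i = j \<and> a = b"
    proof (cases "i < k")
      case True note i = this
      show ?thesis
      proof (cases "j < k")
        case True
        with i ij ab' H show ?thesis by (simp add: nth SSP'_def)
      next
        case False
        with i ij ab' ab[of i a] xm show ?thesis by (simp add: nth)
      qed
    next
      case False note i = this
      show ?thesis
      proof (cases "j < k")
        case True
        with i ij ab' ab[of j b] xm show ?thesis by (simp add: nth)
      next
        case False
        with i ij ab' show ?thesis by (simp add: nth)
      qed
    qed
  qed
  have u: "(\<Union>i<Suc k. abs ` (?p ! i)) = insert m T'"
  proof -
    have "(\<Union>i<Suc k. abs ` (?p ! i)) = abs ` (?p ! k) \<union> (\<Union>i<k. abs ` (?p ! i))"
      by (simp add: lessThan_Suc)
    also have "(\<Union>i<k. abs ` (?p ! i)) = (\<Union>i<k. abs ` (\<pi>' ! i))"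
      by (rule SUP_cong) (simp_all add: nth)
    also have "\<dots> = T'" using H by (simp add: SSP'_def)
    finally show ?thesis using xm by (simp add: nth)
  qed
  have mn: "\<forall>i j. i \<le> j \<and> j < Suc k \<longrightarrow> Min (abs ` (?p ! i)) \<le> Min (abs ` (?p ! j))"
  proof (intro allI impI)
    fix i j assume ij: "i \<le> j \<and> j < Suc k"
    show "Min (abs ` (?p ! i)) \<le> Min (abs ` (?p ! j))"
    proof (cases "j < k")
      case True
      with ij H show ?thesis by (simp add: nth SSP'_def)
    next
      case False
      then have j: "j = k" using ij by simp
      show ?thesis
      proof (cases "i < k")
        case True
        have f: "finite (abs ` (\<pi>'!i))" using SSP'_fin[OF fin H True] by simp
        have n: "abs ` (\<pi>'!i) \<noteq> {}" using H True by (simp add: SSP'_def)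
        have "Min (abs ` (\<pi>'!i)) \<in> abs ` (\<pi>'!i)" using Min_in[OF f n] .
        then have "Min (abs ` (\<pi>'!i)) < m" using ab[OF True] by auto
        then show ?thesis using j True xm by (simp add: nth)
      next
        case False
        then have "i = j" using j ij by simp
        then show ?thesis by simp
      qed
    qed
  qed
  show ?thesis using len ne d u mn by (simp add: SSP'_def)
qed

lemma lemB:
  assumes H: "SSP' T' (Suc k) \<pi>'" and ik: "i \<le> k"
  shows "SSP' (insert m T') (Suc k) (\<pi>'[i := \<pi>'!i \<union> {x}])"
proof -
  let ?p = "\<pi>'[i := \<pi>'!i \<union> {x}]"
  have len: "length \<pi>' = Suc k" using H by (simp add: SSP'_def)
  have nth: "\<And>j. j < Suc k \<Longrightarrow> ?p ! j = (if j = i then \<pi>'!i \<union> {x} else \<pi>'!j)"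
    using len ik by auto
  have ab: "\<And>j y. j < Suc k \<Longrightarrow> y \<in> \<pi>'!j \<Longrightarrow> \<bar>y\<bar> < m"
    using H mbig by (auto dest: SSP'_abs)
  have mem: "\<And>j a. j < Suc k \<Longrightarrow> a \<in> ?p!j \<Longrightarrow> (j = i \<and> a = x) \<or> a \<in> \<pi>'!j"
    using nth by (auto split: if_splits)
  have ne: "\<forall>j<Suc k. ?p ! j \<noteq> {}"
    using H nth by (auto simp: SSP'_def)
  have d: "\<forall>j<Suc k. \<forall>l<Suc k. \<forall>a\<in>?p!j. \<forall>b\<in>?p!l. \<bar>a\<bar> = \<bar>b\<bar> \<longrightarrow> j = l \<and> a = b"
  proof (intro allI impI ballI)
    fix j l a b assume jl: "j < Suc k" "l < Suc k" and ab': "a \<in> ?p!j" "b \<in> ?p!l" "\<bar>a\<bar> = \<bar>b\<bar>"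
    from mem[OF jl(1) ab'(1)] mem[OF jl(2) ab'(2)] show "j = l \<and> a = b"
    proof (elim disjE)
      assume "a \<in> \<pi>'!j" "b \<in> \<pi>'!l"
      then show ?thesis using H jl ab'(3) unfolding SSP'_def by blast
    next
      assume "j = i \<and> a = x" "b \<in> \<pi>'!l"
      then show ?thesis using ab[OF jl(2)] ab'(3) xm by force
    next
      assume "a \<in> \<pi>'!j" "l = i \<and> b = x"
      then show ?thesis using ab[OF jl(1)] ab'(3) xm by force
    qed simp
  qed
  have u: "(\<Union>j<Suc k. abs ` (?p ! j)) = insert m T'"
  proof -
    have "(\<Union>j<Suc k. abs ` (?p ! j)) = (\<Union>j<Suc k. abs ` (\<pi>' ! j) \<union> (if j = i then {m} else {}))"
      apply (rule SUP_cong, simp)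
      subgoal for j using len ik xm by (cases "j = i") auto
      done
    also have "\<dots> = (\<Union>j<Suc k. abs ` (\<pi>' ! j)) \<union> (\<Union>j<Suc k. (if j = i then {m} else {}))"
      by (simp add: UN_Un_distrib)
    also have "(\<Union>j<Suc k. (if j = i then {m} else {})) = {m}"
      using ik by (auto split: if_splits)
    also have "(\<Union>j<Suc k. abs ` (\<pi>' ! j)) = T'" using H by (simp add: SSP'_def)
    finally show ?thesis by simp
  qed
  have mineq: "\<And>j. j < Suc k \<Longrightarrow> Min (abs ` (?p ! j)) = Min (abs ` (\<pi>' ! j))"
  proof -
    fix j assume j: "j < Suc k"
    show "Min (abs ` (?p ! j)) = Min (abs ` (\<pi>' ! j))"
    proof (cases "j = i")
      case True
      have "abs ` (?p ! j) = insert m (abs ` (\<pi>' ! j))" using True j xm len ik by simp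
      moreover have "Min (insert m (abs ` (\<pi>' ! j))) = Min (abs ` (\<pi>' ! j))"
        apply (rule Min_insert_big)
        using SSP'_fin[OF fin H j] H j ab[OF j] by (auto simp: SSP'_def)
      ultimately show ?thesis by simp
    next
      case False then show ?thesis using j by (simp add: nth)
    qed
  qed
  have mn: "\<forall>j l. j \<le> l \<and> l < Suc k \<longrightarrow> Min (abs ` (?p ! j)) \<le> Min (abs ` (?p ! l))"
    using H mineq by (auto simp: SSP'_def)
  show ?thesis using len ne d u mn by (simp add: SSP'_def)
qed

end



context
  fixes T' :: "int set" and m :: int
  assumes fin: "finite T'" and posT: "T' \<subseteq> {0<..}" and mbig: "\<forall>y\<in>T'. y < m"
begin

lemma lemC:
  assumes H: "SSP' (insert m T') (Suc k) \<pi>"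
  shows "(\<exists>\<pi>' x. \<bar>x\<bar> = m \<and> SSP' T' k \<pi>' \<and> \<pi> = \<pi>' @ [{x}])
       \<or> (\<exists>\<pi>' i x. \<bar>x\<bar> = m \<and> i \<le> k \<and> SSP' T' (Suc k) \<pi>' \<and> \<pi> = \<pi>'[i := \<pi>'!i \<union> {x}])"
proof -
  have len: "length \<pi> = Suc k" using H by (simp add: SSP'_def)
  have u: "(\<Union>j<Suc k. abs ` (\<pi> ! j)) = insert m T'" using H by (simp add: SSP'_def)
  have mT: "m \<notin> T'" using mbig by auto
  have finT: "finite (insert m T')" using fin by simp
  have "m \<in> (\<Union>j<Suc k. abs ` (\<pi> ! j))" using u by simp
  then obtain i where "i < Suc k" "m \<in> abs ` (\<pi> ! i)" by blast
  then obtain x where ix: "i < Suc k" "x \<in> \<pi>!i" "\<bar>x\<bar> = m" by auto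
  have dd0: "\<forall>j<Suc k. \<forall>l<Suc k. \<forall>a\<in>\<pi>!j. \<forall>b\<in>\<pi>!l. \<bar>a\<bar> = \<bar>b\<bar> \<longrightarrow> j = l \<and> a = b"
    using H by (simp add: SSP'_def)
  have dd: "\<And>j l a b. j < Suc k \<Longrightarrow> l < Suc k \<Longrightarrow> a \<in> \<pi>!j \<Longrightarrow> b \<in> \<pi>!l \<Longrightarrow> \<bar>a\<bar> = \<bar>b\<bar> \<Longrightarrow> j = l \<and> a = b"
    using dd0 by blast
  have uniq: "\<And>j y. j < Suc k \<Longrightarrow> y \<in> \<pi>!j \<Longrightarrow> \<bar>y\<bar> = m \<Longrightarrow> j = i \<and> y = x"
  proof -
    fix j y assume a: "j < Suc k" "y \<in> \<pi>!j" "\<bar>y\<bar> = m"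
    show "j = i \<and> y = x" using dd[OF a(1) ix(1) a(2) ix(2)] a(3) ix(3) by simp
  qed
  have inT: "\<And>j y. j < Suc k \<Longrightarrow> y \<in> \<pi>!j \<Longrightarrow> \<bar>y\<bar> \<in> insert m T'"
    using H by (rule SSP'_abs)
  have inT': "\<And>j y. j < Suc k \<Longrightarrow> y \<in> \<pi>!j \<Longrightarrow> y \<noteq> x \<Longrightarrow> \<bar>y\<bar> \<in> T'"
    using inT uniq by blast
  have ne: "\<And>j. j < Suc k \<Longrightarrow> \<pi>!j \<noteq> {}" using H by (simp add: SSP'_def)
  have fb: "\<And>j. j < Suc k \<Longrightarrow> finite (abs ` (\<pi>!j))" using SSP'_fin[OF finT H] by simp
  have mo: "\<And>j l. j \<le> l \<Longrightarrow> l < Suc k \<Longrightarrow> Min (abs ` (\<pi> ! j)) \<le> Min (abs ` (\<pi> ! l))"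
    using H by (simp add: SSP'_def)
  show ?thesis
  proof (cases "\<pi>!i = {x}")
    case True
    have ik: "i = k"
    proof (rule ccontr)
      assume "i \<noteq> k"
      then have "i < k" using ix by simp
      then have "Min (abs ` (\<pi> ! i)) \<le> Min (abs ` (\<pi> ! k))" using mo by simp
      moreover have "Min (abs ` (\<pi> ! i)) = m" using True ix by simp
      moreover have "Min (abs ` (\<pi> ! k)) \<in> abs ` (\<pi> ! k)" using Min_in[OF fb[of k]] ne[of k] by simp
      then obtain y where y: "y \<in> \<pi>!k" "Min (abs ` (\<pi> ! k)) = \<bar>y\<bar>" by auto
      moreover have "y \<noteq> x" using uniq[of k y] y \<open>i < k\<close> ix by auto
      then have "\<bar>y\<bar> \<in> T'" using inT'[of k y] y by simp
      then have "\<bar>y\<bar> < m" using mbig by simp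
      ultimately show False by simp
    qed
    let ?p = "take k \<pi>"
    have pe: "\<pi> = ?p @ [{x}]"
    proof -
      have "take (Suc k) \<pi> = take k \<pi> @ [\<pi>!k]" by (rule take_Suc_conv_app_nth) (simp add: len)
      moreover have "take (Suc k) \<pi> = \<pi>" using len by simp
      ultimately show ?thesis using ik True by simp
    qed
    have nth: "\<And>j. j < k \<Longrightarrow> ?p ! j = \<pi> ! j" by simp
    have lp: "length ?p = k" using len by simp
    have u': "(\<Union>j<k. abs ` (?p ! j)) = T'"
    proof -
      have "(\<Union>j<Suc k. abs ` (\<pi> ! j)) = insert m (\<Union>j<k. abs ` (\<pi> ! j))"
        using True ik ix by (simp add: lessThan_Suc)
      moreover have "m \<notin> (\<Union>j<k. abs ` (\<pi> ! j))"
      proof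
        assume "m \<in> (\<Union>j<k. abs ` (\<pi> ! j))"
        then obtain j y where "j < k" "y \<in> \<pi>!j" "\<bar>y\<bar> = m" by auto
        then show False using uniq[of j y] ik by simp
      qed
      ultimately have "(\<Union>j<k. abs ` (\<pi> ! j)) = T'" using u mT
        by (metis Diff_insert_absorb)
      then show ?thesis by simp
    qed
    have ne1: "\<forall>j<k. ?p ! j \<noteq> {}" using ne nth by simp
    have dd1: "\<forall>j<k. \<forall>l<k. \<forall>a\<in>?p!j. \<forall>b\<in>?p!l. \<bar>a\<bar> = \<bar>b\<bar> \<longrightarrow> j = l \<and> a = b"
    proof (intro allI impI ballI)
      fix j l a b assume jl: "j < k" "l < k" "a \<in> ?p!j" "b \<in> ?p!l" "\<bar>a\<bar> = \<bar>b\<bar>"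
      show "j = l \<and> a = b" using dd[of j l a b] jl nth by simp
    qed
    have mo1: "\<forall>j l. j \<le> l \<and> l < k \<longrightarrow> Min (abs ` (?p ! j)) \<le> Min (abs ` (?p ! l))"
    proof (intro allI impI)
      fix j l assume jl: "j \<le> l \<and> l < k"
      then show "Min (abs ` (?p ! j)) \<le> Min (abs ` (?p ! l))" using mo[of j l] nth[of j] nth[of l] by simp
    qed
    have "SSP' T' k ?p"
      unfolding SSP'_def using lp u' ne1 dd1 mo1 by blast
    then show ?thesis using pe ix by blast
  next
    case False
    let ?p = "\<pi>[i := \<pi>!i - {x}]"
    have nth: "\<And>j. j < Suc k \<Longrightarrow> ?p ! j = (if j = i then \<pi>!i - {x} else \<pi>!j)"
      using len ix by auto
    have lp: "length ?p = Suc k" using len by simp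
    have pe: "\<pi> = ?p[i := ?p!i \<union> {x}]"
      using len ix by (simp add: insert_absorb)
    have ne': "\<forall>j<Suc k. ?p ! j \<noteq> {}"
      using ne False ix nth by auto
    have dd': "\<forall>j<Suc k. \<forall>l<Suc k. \<forall>a\<in>?p!j. \<forall>b\<in>?p!l. \<bar>a\<bar> = \<bar>b\<bar> \<longrightarrow> j = l \<and> a = b"
    proof (intro allI impI ballI)
      fix j l a b assume jl: "j < Suc k" "l < Suc k" "a \<in> ?p!j" "b \<in> ?p!l" "\<bar>a\<bar> = \<bar>b\<bar>"
      have "a \<in> \<pi>!j" using jl(3) nth[OF jl(1)] by (auto split: if_splits)
      moreover have "b \<in> \<pi>!l" using jl(4) nth[OF jl(2)] by (auto split: if_splits)
      ultimately show "j = l \<and> a = b" using dd[OF jl(1,2)] jl(5) by blast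
    qed
    have u': "(\<Union>j<Suc k. abs ` (?p ! j)) = T'"
    proof
      show "(\<Union>j<Suc k. abs ` (?p ! j)) \<subseteq> T'"
      proof
        fix t assume "t \<in> (\<Union>j<Suc k. abs ` (?p ! j))"
        then obtain j y where jy: "j < Suc k" "y \<in> ?p!j" "t = \<bar>y\<bar>" by auto
        then have "y \<in> \<pi>!j" "y \<noteq> x \<or> j \<noteq> i" using nth by (auto split: if_splits)
        then have "y \<noteq> x" using uniq jy ix by blast
        then show "t \<in> T'" using inT' jy \<open>y \<in> \<pi>!j\<close> by simp
      qed
    next
      show "T' \<subseteq> (\<Union>j<Suc k. abs ` (?p ! j))"
      proof
        fix t assume t: "t \<in> T'"
        then obtain j y where jy: "j < Suc k" "y \<in> \<pi>!j" "t = \<bar>y\<bar>" using u by blast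
        then have "y \<noteq> x" using t ix mT by auto
        then have "y \<in> ?p!j" using jy nth[OF jy(1)] by (cases "j = i") auto
        then show "t \<in> (\<Union>j<Suc k. abs ` (?p ! j))" using jy by blast
      qed
    qed
    have mineq: "\<And>j. j < Suc k \<Longrightarrow> Min (abs ` (\<pi> ! j)) = Min (abs ` (?p ! j))"
    proof -
      fix j assume j: "j < Suc k"
      show "Min (abs ` (\<pi> ! j)) = Min (abs ` (?p ! j))"
      proof (cases "j = i")
        case True
        have e: "abs ` (\<pi> ! j) = insert m (abs ` (?p ! j))"
        proof -
          have "\<pi>!i = insert x (\<pi>!i - {x})" using ix by auto
          then have "abs ` (\<pi> ! i) = insert m (abs ` (\<pi>!i - {x}))" using ix
            by (metis image_insert)
          then show ?thesis using True nth j by simp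
        qed
        have "Min (insert m (abs ` (?p ! j))) = Min (abs ` (?p ! j))"
        proof (rule Min_insert_big)
          show "finite (abs ` (?p ! j))" using fb[OF j] nth[OF j] True
            by (metis Diff_subset finite_subset image_mono)
          show "abs ` (?p ! j) \<noteq> {}" using ne' j by simp
          show "\<forall>b\<in>abs ` (?p ! j). b < m"
          proof
            fix b assume "b \<in> abs ` (?p ! j)"
            then obtain y where y: "y \<in> \<pi>!i" "y \<noteq> x" "b = \<bar>y\<bar>" using True nth j by auto
            then show "b < m" using inT'[OF ix(1) y(1) y(2)] mbig by simp
          qed
        qed
        then show ?thesis using e by simp
      next
        case False then show ?thesis using j nth by simp
      qed
    qed
    have mo': "\<forall>j l. j \<le> l \<and> l < Suc k \<longrightarrow> Min (abs ` (?p ! j)) \<le> Min (abs ` (?p ! l))"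
    proof (intro allI impI)
      fix j l assume jl: "j \<le> l \<and> l < Suc k"
      then have "j < Suc k" by simp
      then show "Min (abs ` (?p ! j)) \<le> Min (abs ` (?p ! l))"
        using mo[of j l] mineq[of j] mineq[of l] jl by simp
    qed
    have "SSP' T' (Suc k) ?p"
      unfolding SSP'_def using lp ne' dd' u' mo' by blast
    then have "\<exists>\<pi>' i x. \<bar>x\<bar> = m \<and> i \<le> k \<and> SSP' T' (Suc k) \<pi>' \<and> \<pi> = \<pi>'[i := \<pi>'!i \<union> {x}]"
      using pe ix by (intro exI[of _ ?p] exI[of _ i] exI[of _ x]) simp
    then show ?thesis by blast
  qed
qed

end


definition Ssum :: "int set list \<Rightarrow> nat" where
  "Ssum \<pi> = (\<Sum>i<length \<pi>. (i + 1) * card (\<pi> ! i))"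

lemma mstat_Ssum: "mstat \<pi> = 2 * Ssum \<pi> - pos \<pi>"
  by (simp add: mstat_def Ssum_def)

lemma UN_set_nth: "\<Union>(set \<pi>) = (\<Union>i<length \<pi>. \<pi>!i)"
  by (auto simp: set_conv_nth)

lemma card_UN_le: "card (\<Union>(set \<pi>)) \<le> sum_list (map card \<pi>)"
proof (induction \<pi>)
  case Nil then show ?case by simp
next
  case (Cons B \<pi>)
  have "card (\<Union>(set (B # \<pi>))) \<le> card B + card (\<Union>(set \<pi>))"
    by (simp add: card_Un_le)
  then show ?case using Cons by simp
qed

lemma pos_le:
  assumes "\<forall>B\<in>set \<pi>. finite B"
  shows "pos \<pi> \<le> 2 * Ssum \<pi>"
proof -
  have fin: "finite (\<Union>(set \<pi>))" using assms by simp
  have "pos \<pi> \<le> card (\<Union>(set \<pi>))" unfolding pos_def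
    by (rule card_mono[OF fin]) auto
  also have "\<dots> \<le> sum_list (map card \<pi>)" by (rule card_UN_le)
  also have "sum_list (map card \<pi>) = (\<Sum>i<length \<pi>. card (\<pi> ! i))"
    by (simp add: sum_list_sum_nth lessThan_atLeast0)
  also have "\<dots> \<le> Ssum \<pi>" unfolding Ssum_def by (rule sum_mono) simp
  finally show ?thesis by simp
qed

lemma mstat_upd:
  assumes i: "i < length \<pi>" and fin: "\<forall>B\<in>set \<pi>. finite B" and x: "x \<notin> \<Union>(set \<pi>)"
  shows "mstat (\<pi>[i := \<pi>!i \<union> {x}]) = mstat \<pi> + (2 * (i + 1) - (if x > 0 then 1 else 0))"
proof -
  let ?p = "\<pi>[i := \<pi>!i \<union> {x}]"
  have fi: "finite (\<pi>!i)" using fin i by simp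
  have xi: "x \<notin> \<pi>!i" using x i by (auto simp: set_conv_nth)
  have "Ssum ?p = (\<Sum>j<length \<pi>. (j + 1) * card (\<pi> ! j) + (if j = i then i + 1 else 0))"
    unfolding Ssum_def
    apply (simp only: length_list_update)
    apply (rule sum.cong, simp)
    subgoal for j using i fi xi by (cases "j = i") auto
    done
  also have "\<dots> = Ssum \<pi> + (i + 1)"
    using i by (simp add: sum.distrib Ssum_def)
  finally have s: "Ssum ?p = Ssum \<pi> + (i + 1)" .
  have u: "\<Union>(set ?p) = insert x (\<Union>(set \<pi>))"
  proof -
    have "\<Union>(set ?p) = (\<Union>j<length \<pi>. ?p!j)" by (simp add: UN_set_nth)
    also have "\<dots> = (\<Union>j<length \<pi>. \<pi>!j \<union> (if j = i then {x} else {}))"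
      apply (rule SUP_cong, simp)
      subgoal for j using i by (cases "j = i") auto
      done
    also have "\<dots> = (\<Union>j<length \<pi>. \<pi>!j) \<union> (\<Union>j<length \<pi>. (if j = i then {x} else {}))"
      by (simp add: UN_Un_distrib)
    also have "(\<Union>j<length \<pi>. (if j = i then {x} else {})) = {x}"
      using i by (auto split: if_splits)
    finally show ?thesis by (simp add: UN_set_nth)
  qed
  have fU: "finite (\<Union>(set \<pi>))" using fin by simp
  have p: "pos ?p = pos \<pi> + (if x > 0 then 1 else 0)"
  proof (cases "x > 0")
    case True
    then have "{y \<in> \<Union>(set ?p). y > 0} = insert x {y \<in> \<Union>(set \<pi>). y > 0}" using u by auto
    moreover have "card (insert x {y \<in> \<Union>(set \<pi>). y > 0}) = card {y \<in> \<Union>(set \<pi>). y > 0} + 1"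
    proof -
      have "finite {y \<in> \<Union>(set \<pi>). y > 0}" using fU by (rule finite_subset[rotated]) auto
      moreover have "x \<notin> {y \<in> \<Union>(set \<pi>). y > 0}" using x by simp
      ultimately show ?thesis using card_insert_disjoint[of "{y \<in> \<Union>(set \<pi>). y > 0}" x] by simp
    qed
    ultimately show ?thesis using True by (simp add: pos_def)
  next
    case False
    then have "{y \<in> \<Union>(set ?p). y > 0} = {y \<in> \<Union>(set \<pi>). y > 0}" using u by auto
    then show ?thesis using False by (simp add: pos_def)
  qed
  have le: "pos \<pi> \<le> 2 * Ssum \<pi>" by (rule pos_le[OF fin])
  show ?thesis unfolding mstat_Ssum s p using le by auto
qed

lemma mstat_app_empty: "mstat (\<pi> @ [{}]) = mstat \<pi>"
proof -
  have "Ssum (\<pi> @ [{}]) = Ssum \<pi>"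
    unfolding Ssum_def by (simp add: nth_append)
  moreover have "pos (\<pi> @ [{}]) = pos \<pi>" by (simp add: pos_def)
  ultimately show ?thesis by (simp add: mstat_Ssum)
qed

lemma SSP'_set_fin: "finite T \<Longrightarrow> SSP' T k \<pi> \<Longrightarrow> \<forall>B\<in>set \<pi>. finite B"
proof
  fix B assume a: "finite T" "SSP' T k \<pi>" "B \<in> set \<pi>"
  then obtain i where "i < length \<pi>" "B = \<pi>!i" by (auto simp: set_conv_nth)
  moreover have "length \<pi> = k" using a by (simp add: SSP'_def)
  ultimately show "finite B" using SSP'_fin[OF a(1,2)] by simp
qed

lemma SSP'_notin: "SSP' T k \<pi> \<Longrightarrow> \<bar>x\<bar> \<notin> T \<Longrightarrow> x \<notin> \<Union>(set \<pi>)"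
  by (auto simp: set_conv_nth SSP'_def dest: SSP'_abs)

lemma mstat_add:
  assumes "finite T" "SSP' T k \<pi>" "\<bar>x\<bar> \<notin> T" "i < k"
  shows "mstat (\<pi>[i := \<pi>!i \<union> {x}]) = mstat \<pi> + (2 * (i + 1) - (if x > 0 then 1 else 0))"
proof -
  have "i < length \<pi>" using assms(2,4) by (simp add: SSP'_def)
  then show ?thesis using mstat_upd[of i \<pi> x] SSP'_set_fin[OF assms(1,2)] SSP'_notin[OF assms(2,3)] by blast
qed

lemma mstat_app:
  assumes "finite T" "SSP' T k \<pi>" "\<bar>x\<bar> \<notin> T"
  shows "mstat (\<pi> @ [{x}]) = mstat \<pi> + (2 * (k + 1) - (if x > 0 then 1 else 0))"
proof -
  have len: "length \<pi> = k" using assms by (simp add: SSP'_def)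
  have e: "\<pi> @ [{x}] = (\<pi> @ [{}])[k := (\<pi> @ [{}])!k \<union> {x}]" using len by (simp add: list_update_append nth_append)
  have "mstat ((\<pi> @ [{}])[k := (\<pi> @ [{}])!k \<union> {x}]) = mstat (\<pi> @ [{}]) + (2 * (k + 1) - (if x > 0 then 1 else 0))"
    apply (rule mstat_upd)
    using len SSP'_set_fin[OF assms(1,2)] SSP'_notin[OF assms(2,3)] by auto
  then show ?thesis using e mstat_app_empty by simp
qed



definition Bset' :: "int set \<Rightarrow> nat \<Rightarrow> int set list set" where
  "Bset' T k = {\<pi>. SSP' T k \<pi>}"

definition WW :: "'a::comm_ring_1 \<Rightarrow> int set \<Rightarrow> nat \<Rightarrow> 'a" where
  "WW q T k = (\<Sum>\<pi>\<in>Bset' T k. q ^ mstat \<pi>)"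

lemma SSP'_D: assumes "SSP' T k \<pi>"
  shows "length \<pi> = k" "\<forall>i<k. \<pi>!i \<noteq> {}" "(\<Union>i<k. abs ` (\<pi>!i)) = T"
  using assms unfolding SSP'_def by blast+

lemma Bset_eq: "T \<subseteq> {0<..} \<Longrightarrow> Bset T k = Bset' T k"
  by (simp add: Bset_def Bset'_def SSP_iff)

lemma Bset'_fin: "finite T \<Longrightarrow> finite (Bset' T k)"
proof -
  assume f: "finite T"
  have "Bset' T k \<subseteq> {xs. set xs \<subseteq> Pow {y. \<bar>y\<bar> \<in> T} \<and> length xs = k}"
  proof
    fix \<pi> assume "\<pi> \<in> Bset' T k"
    then have H: "SSP' T k \<pi>" by (simp add: Bset'_def)
    then have "length \<pi> = k" by (simp add: SSP'_def)
    moreover have "set \<pi> \<subseteq> Pow {y. \<bar>y\<bar> \<in> T}"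
    proof
      fix B assume "B \<in> set \<pi>"
      then obtain i where "i < k" "B = \<pi>!i" using \<open>length \<pi> = k\<close> by (auto simp: set_conv_nth)
      then show "B \<in> Pow {y. \<bar>y\<bar> \<in> T}" using SSP'_abs[OF H] by auto
    qed
    ultimately show "\<pi> \<in> {xs. set xs \<subseteq> Pow {y. \<bar>y\<bar> \<in> T} \<and> length xs = k}" by simp
  qed
  moreover have "finite {xs. set xs \<subseteq> Pow {y. \<bar>y\<bar> \<in> T} \<and> length xs = k}"
    using fin_abs_set[OF f] by (intro finite_lists_length_eq) simp
  ultimately show ?thesis by (rule finite_subset)
qed

lemma Bset'_empty: "Bset' {} k = (if k = 0 then {[]} else {})"
proof (cases k)
  case 0 then show ?thesis by (auto simp: Bset'_def SSP'_def)
next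
  case (Suc k')
  have "\<not> SSP' {} k \<pi>" for \<pi>
  proof
    assume H: "SSP' {} k \<pi>"
    then have "\<pi>!0 \<noteq> {}" using SSP'_D(2)[OF H] Suc by simp
    then obtain y where "y \<in> \<pi>!0" by auto
    then have "\<bar>y\<bar> \<in> {}" using SSP'_abs[OF H, of 0 y] Suc by simp
    then show False by simp
  qed
  then show ?thesis using Suc by (auto simp: Bset'_def)
qed

lemma Bset'_zero: "T \<noteq> {} \<Longrightarrow> Bset' T 0 = {}"
proof -
  assume "T \<noteq> {}"
  moreover have "SSP' T 0 \<pi> \<Longrightarrow> T = {}" for \<pi> by (simp add: SSP'_def)
  ultimately show ?thesis by (auto simp: Bset'_def)
qed

lemma WW_empty: "WW q {} k = (if k = 0 then 1 else 0)"
  by (simp add: WW_def Bset'_empty mstat_def pos_def)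

lemma WW_zero: "T \<noteq> {} \<Longrightarrow> WW q T 0 = 0"
  by (simp add: WW_def Bset'_zero)



lemma geo_sum: "(\<Sum>i\<le>k. (q::'a::comm_ring_1) ^ (2 * i + 1) + q ^ (2 * i + 2)) = (q * (1 + q)) * qint (q^2) (Suc k)"
proof -
  have "(\<Sum>i\<le>k. q ^ (2 * i + 1) + q ^ (2 * i + 2)) = (\<Sum>i\<le>k. (q * (1 + q)) * (q^2)^i)"
  proof (rule sum.cong[OF refl])
    fix i
    have e: "q^(2*i) = (q^2)^i" by (simp add: power_mult)
    have "q ^ (2 * i + 1) + q ^ (2 * i + 2) = q^(2*i) * (q * (1 + q))"
      by (simp add: power_add algebra_simps power2_eq_square)
    then show "q ^ (2 * i + 1) + q ^ (2 * i + 2) = (q * (1 + q)) * (q^2)^i" using e by (simp add: mult.commute)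
  qed
  also have "\<dots> = (q * (1 + q)) * qint (q^2) (Suc k)"
    by (simp add: qint_def sum_distrib_left lessThan_Suc_atMost)
  finally show ?thesis .
qed

context
  fixes T' :: "int set" and m :: int
  assumes fin: "finite T'" and posT: "T' \<subseteq> {0<..}" and mbig: "\<forall>y\<in>T'. y < m" and mpos: "m > 0"
begin

lemma mT: "m \<notin> T'" using mbig by auto

lemma absm: "\<bar>x\<bar> = m \<longleftrightarrow> x \<in> {m, -m}"
  using mpos by auto

lemma SSPabs': "SSP' T' k \<pi> \<Longrightarrow> i < k \<Longrightarrow> y \<in> \<pi>!i \<Longrightarrow> \<bar>y\<bar> \<noteq> m"
  using SSP'_abs mT by blast

lemma WW_step:
  "WW q (insert m T') (Suc k) = q^(2*k+1) * (1+q) * WW q T' k + (q*(1+q)) * qint (q^2) (Suc k) * WW q T' (Suc k)"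
proof -
  define X where "X = {m, -m}"
  define DA where "DA = Bset' T' k \<times> X"
  define FA where "FA = (\<lambda>(\<pi>::int set list, x::int). \<pi> @ [{x}])"
  define DB where "DB = Bset' T' (Suc k) \<times> ({..k} \<times> X)"
  define FB where "FB = (\<lambda>(\<pi>::int set list, i::nat, x::int). \<pi>[i := \<pi>!i \<union> {x}])"
  have Xabs: "\<And>x. x \<in> X \<Longrightarrow> \<bar>x\<bar> = m" using absm X_def by blast
  have XnT: "\<And>x. x \<in> X \<Longrightarrow> \<bar>x\<bar> \<notin> T'" using Xabs mT by blast
  have eq: "Bset' (insert m T') (Suc k) = FA ` DA \<union> FB ` DB"
  proof
    show "Bset' (insert m T') (Suc k) \<subseteq> FA ` DA \<union> FB ` DB"
    proof
      fix \<pi> assume "\<pi> \<in> Bset' (insert m T') (Suc k)"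
      then have H: "SSP' (insert m T') (Suc k) \<pi>" by (simp add: Bset'_def)
      from lemC[OF fin posT mbig H] show "\<pi> \<in> FA ` DA \<union> FB ` DB"
      proof (elim disjE exE conjE)
        fix \<pi>' x assume a: "\<bar>x\<bar> = m" "SSP' T' k \<pi>'" "\<pi> = \<pi>' @ [{x}]"
        then have "(\<pi>', x) \<in> DA" using absm by (simp add: DA_def X_def Bset'_def)
        then show ?thesis using a(3) unfolding FA_def by (intro UnI1 image_eqI[of _ _ "(\<pi>',x)"]) auto
      next
        fix \<pi>' i x assume a: "\<bar>x\<bar> = m" "i \<le> k" "SSP' T' (Suc k) \<pi>'" "\<pi> = \<pi>'[i := \<pi>'!i \<union> {x}]"
        then have "(\<pi>', i, x) \<in> DB" using absm by (simp add: DB_def X_def Bset'_def)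
        then show ?thesis using a(4) unfolding FB_def by (intro UnI2 image_eqI[of _ _ "(\<pi>',i,x)"]) auto
      qed
    qed
  next
    show "FA ` DA \<union> FB ` DB \<subseteq> Bset' (insert m T') (Suc k)"
    proof (rule Un_least; rule image_subsetI)
      fix p assume "p \<in> DA"
      then obtain \<pi> x where p: "p = (\<pi>, x)" "SSP' T' k \<pi>" "x \<in> X" by (auto simp: DA_def Bset'_def)
      show "FA p \<in> Bset' (insert m T') (Suc k)"
        using lemA[OF fin posT mbig Xabs[OF p(3)] p(2)] p(1) by (simp add: FA_def Bset'_def)
    next
      fix p assume "p \<in> DB"
      then obtain \<pi> i x where p: "p = (\<pi>, i, x)" "SSP' T' (Suc k) \<pi>" "i \<le> k" "x \<in> X"
        by (auto simp: DB_def Bset'_def)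
      show "FB p \<in> Bset' (insert m T') (Suc k)"
        using lemB[OF fin posT mbig Xabs[OF p(4)] p(2) p(3)] p(1) by (simp add: FB_def Bset'_def)
    qed
  qed
  have disj: "FA ` DA \<inter> FB ` DB = {}"
  proof (rule ccontr)
    assume "FA ` DA \<inter> FB ` DB \<noteq> {}"
    then obtain p1 p2 where pp: "p1 \<in> DA" "p2 \<in> DB" "FA p1 = FB p2" by blast
    then obtain \<pi> x where p1: "p1 = (\<pi>, x)" "SSP' T' k \<pi>" "x \<in> X" by (auto simp: DA_def Bset'_def)
    obtain \<pi>2 i x2 where p2: "p2 = (\<pi>2, i, x2)" "SSP' T' (Suc k) \<pi>2" "i \<le> k" "x2 \<in> X"
      using pp(2) by (auto simp: DB_def Bset'_def)
    have e: "\<pi> @ [{x}] = \<pi>2[i := \<pi>2!i \<union> {x2}]" using pp(3) p1 p2 by (simp add: FA_def FB_def)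
    have l1: "length \<pi> = k" using SSP'_D(1)[OF p1(2)] .
    have l2: "length \<pi>2 = Suc k" using SSP'_D(1)[OF p2(2)] .
    have "(\<pi> @ [{x}]) ! k = {x}" by (simp add: nth_append l1)
    moreover have "\<pi>2 ! k \<subseteq> (\<pi>2[i := \<pi>2!i \<union> {x2}]) ! k"
      using l2 by (cases "i = k") auto
    ultimately have sub: "\<pi>2 ! k \<subseteq> {x}" using e by simp
    obtain y where y: "y \<in> \<pi>2 ! k" using SSP'_D(2)[OF p2(2)] by blast
    then have "y = x" using sub by auto
    then show False using SSPabs'[OF p2(2) _ y] Xabs[OF p1(3)] by simp
  qed
  have injA: "inj_on FA DA"
    by (rule inj_onI) (auto simp: FA_def)
  have injB: "inj_on FB DB"
  proof (rule inj_onI)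
    fix p1 p2 assume pp: "p1 \<in> DB" "p2 \<in> DB" "FB p1 = FB p2"
    obtain \<pi>1 i1 x1 where p1: "p1 = (\<pi>1, i1, x1)" "SSP' T' (Suc k) \<pi>1" "i1 \<le> k" "x1 \<in> X"
      using pp(1) by (auto simp: DB_def Bset'_def)
    obtain \<pi>2 i2 x2 where p2: "p2 = (\<pi>2, i2, x2)" "SSP' T' (Suc k) \<pi>2" "i2 \<le> k" "x2 \<in> X"
      using pp(2) by (auto simp: DB_def Bset'_def)
    define R where "R = \<pi>1[i1 := \<pi>1!i1 \<union> {x1}]"
    have R2: "R = \<pi>2[i2 := \<pi>2!i2 \<union> {x2}]" using pp(3) p1 p2 by (simp add: FB_def R_def)
    have HR: "SSP' (insert m T') (Suc k) R"
      using lemB[OF fin posT mbig Xabs[OF p1(4)] p1(2) p1(3)] by (simp add: R_def)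
    have l1: "length \<pi>1 = Suc k" using SSP'_D(1)[OF p1(2)] .
    have l2: "length \<pi>2 = Suc k" using SSP'_D(1)[OF p2(2)] .
    have x1R: "x1 \<in> R ! i1" using l1 p1(3) by (simp add: R_def)
    have x2R: "x2 \<in> R ! i2" using l2 p2(3) R2 by simp
    have dd: "\<forall>j<Suc k. \<forall>l<Suc k. \<forall>a\<in>R!j. \<forall>b\<in>R!l. \<bar>a\<bar> = \<bar>b\<bar> \<longrightarrow> j = l \<and> a = b"
      using HR by (simp add: SSP'_def)
    have "i1 = i2 \<and> x1 = x2"
      using dd p1(3) p2(3) x1R x2R Xabs[OF p1(4)] Xabs[OF p2(4)] by (metis le_imp_less_Suc)
    then have ii: "i1 = i2" and xx: "x1 = x2" by auto
    have "\<pi>1 = \<pi>2"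
    proof (rule nth_equalityI)
      show "length \<pi>1 = length \<pi>2" using l1 l2 by simp
    next
      fix j assume j: "j < length \<pi>1"
      show "\<pi>1 ! j = \<pi>2 ! j"
      proof (cases "j = i1")
        case False
        have "R ! j = \<pi>1 ! j" using False by (simp add: R_def)
        moreover have "R ! j = \<pi>2 ! j" using False ii R2 by simp
        ultimately show ?thesis by simp
      next
        case True
        have a: "R ! j = \<pi>1 ! j \<union> {x1}" using True j by (simp add: R_def)
        have b: "R ! j = \<pi>2 ! j \<union> {x1}" using True ii xx R2 j l1 l2 by simp
        have n1: "x1 \<notin> \<pi>1 ! j" using SSPabs'[OF p1(2), of j x1] Xabs[OF p1(4)] j l1 by auto
        have n2: "x1 \<notin> \<pi>2 ! j" using SSPabs'[OF p2(2), of j x1] Xabs[OF p1(4)] j l1 by auto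
        from a b n1 n2 show ?thesis by blast
      qed
    qed
    then show "p1 = p2" using p1(1) p2(1) ii xx by simp
  qed
  have finX: "finite X" by (simp add: X_def)
  have finDA: "finite DA" using Bset'_fin[OF fin] finX by (simp add: DA_def)
  have finDB: "finite DB" using Bset'_fin[OF fin] finX by (simp add: DB_def)
  have mm: "m \<noteq> -m" using mpos by simp
  have sA: "(\<Sum>\<pi>\<in>FA ` DA. q ^ mstat \<pi>) = q^(2*k+1) * (1+q) * WW q T' k"
  proof -
    have "(\<Sum>\<pi>\<in>FA ` DA. q ^ mstat \<pi>) = (\<Sum>p\<in>DA. q ^ mstat (FA p))"
      by (simp add: sum.reindex[OF injA])
    also have "\<dots> = (\<Sum>\<pi>\<in>Bset' T' k. \<Sum>x\<in>X. q ^ mstat (\<pi> @ [{x}]))"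
      by (simp add: DA_def FA_def sum.cartesian_product split_def)
    also have "\<dots> = (\<Sum>\<pi>\<in>Bset' T' k. q ^ mstat \<pi> * (q^(2*k+1) * (1+q)))"
    proof (rule sum.cong[OF refl])
      fix \<pi> assume "\<pi> \<in> Bset' T' k"
      then have H: "SSP' T' k \<pi>" by (simp add: Bset'_def)
      have "(\<Sum>x\<in>X. q ^ mstat (\<pi> @ [{x}])) = q ^ mstat (\<pi> @ [{m}]) + q ^ mstat (\<pi> @ [{-m}])"
        using mm by (simp add: X_def)
      also have "\<dots> = q ^ (mstat \<pi> + (2 * k + 1)) + q ^ (mstat \<pi> + (2 * k + 2))"
        using mstat_app[OF fin H, of m] mstat_app[OF fin H, of "-m"] mT mpos by simp
      also have "\<dots> = q ^ mstat \<pi> * (q^(2*k+1) * (1+q))"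
        by (simp add: power_add algebra_simps)
      finally show "(\<Sum>x\<in>X. q ^ mstat (\<pi> @ [{x}])) = q ^ mstat \<pi> * (q^(2*k+1) * (1+q))" .
    qed
    also have "\<dots> = q^(2*k+1) * (1+q) * WW q T' k"
      by (simp add: WW_def sum_distrib_right mult.commute)
    finally show ?thesis .
  qed
  have sB: "(\<Sum>\<pi>\<in>FB ` DB. q ^ mstat \<pi>) = (q*(1+q)) * qint (q^2) (Suc k) * WW q T' (Suc k)"
  proof -
    have "(\<Sum>\<pi>\<in>FB ` DB. q ^ mstat \<pi>) = (\<Sum>p\<in>DB. q ^ mstat (FB p))"
      by (simp add: sum.reindex[OF injB])
    also have "\<dots> = (\<Sum>\<pi>\<in>Bset' T' (Suc k). \<Sum>i\<le>k. \<Sum>x\<in>X. q ^ mstat (\<pi>[i := \<pi>!i \<union> {x}]))"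
      by (simp add: DB_def FB_def sum.cartesian_product split_def)
    also have "\<dots> = (\<Sum>\<pi>\<in>Bset' T' (Suc k). q ^ mstat \<pi> * ((q*(1+q)) * qint (q^2) (Suc k)))"
    proof (rule sum.cong[OF refl])
      fix \<pi> assume "\<pi> \<in> Bset' T' (Suc k)"
      then have H: "SSP' T' (Suc k) \<pi>" by (simp add: Bset'_def)
      have "(\<Sum>i\<le>k. \<Sum>x\<in>X. q ^ mstat (\<pi>[i := \<pi>!i \<union> {x}]))
          = (\<Sum>i\<le>k. q ^ mstat \<pi> * (q ^ (2 * i + 1) + q ^ (2 * i + 2)))"
      proof (rule sum.cong[OF refl])
        fix i assume i: "i \<in> {..k}"
        then have i': "i < Suc k" by simp
        have "(\<Sum>x\<in>X. q ^ mstat (\<pi>[i := \<pi>!i \<union> {x}])) = q ^ mstat (\<pi>[i := \<pi>!i \<union> {m}]) + q ^ mstat (\<pi>[i := \<pi>!i \<union> {-m}])"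
          using mm by (simp add: X_def)
        also have "\<dots> = q ^ (mstat \<pi> + (2 * i + 1)) + q ^ (mstat \<pi> + (2 * i + 2))"
          using mstat_add[OF fin H, of m i] mstat_add[OF fin H, of "-m" i] mT mpos i' by simp
        also have "\<dots> = q ^ mstat \<pi> * (q ^ (2 * i + 1) + q ^ (2 * i + 2))"
          by (simp add: power_add algebra_simps)
        finally show "(\<Sum>x\<in>X. q ^ mstat (\<pi>[i := \<pi>!i \<union> {x}])) = q ^ mstat \<pi> * (q ^ (2 * i + 1) + q ^ (2 * i + 2))" .
      qed
      also have "\<dots> = q ^ mstat \<pi> * ((q*(1+q)) * qint (q^2) (Suc k))"
        by (simp only: sum_distrib_left[symmetric] geo_sum)
      finally show "(\<Sum>i\<le>k. \<Sum>x\<in>X. q ^ mstat (\<pi>[i := \<pi>!i \<union> {x}])) = q ^ mstat \<pi> * ((q*(1+q)) * qint (q^2) (Suc k))" .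
    qed
    also have "\<dots> = (q*(1+q)) * qint (q^2) (Suc k) * WW q T' (Suc k)"
      by (simp add: WW_def sum_distrib_right mult.commute)
    finally show ?thesis .
  qed
  have "WW q (insert m T') (Suc k) = (\<Sum>\<pi>\<in>FA ` DA. q ^ mstat \<pi>) + (\<Sum>\<pi>\<in>FB ` DB. q ^ mstat \<pi>)"
    unfolding WW_def eq
    by (rule sum.union_disjoint) (use finDA finDB disj in auto)
  then show ?thesis using sA sB by simp
qed

end


lemma WW_formula:
  assumes "finite T" "T \<subseteq> {0<..}"
  shows "WW q T k = q^(k^2) * (1+q)^k * hh q (card T) k"
  using assms
proof (induction "card T" arbitrary: T k)
  case 0
  then have "T = {}" by simp
  then show ?case by (simp add: WW_empty hh_0)
next
  case (Suc n)
  then have ne: "T \<noteq> {}" by auto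
  define m where "m = Max T"
  define T' where "T' = T - {m}"
  have mT: "m \<in> T" using Max_in[OF Suc.prems(1) ne] by (simp add: m_def)
  have Te: "T = insert m T'" using mT by (auto simp: T'_def)
  have fin': "finite T'" using Suc.prems(1) by (simp add: T'_def)
  have pos': "T' \<subseteq> {0<..}" using Suc.prems(2) by (auto simp: T'_def)
  have cn: "card T' = n" using Suc.hyps(2) mT Suc.prems(1) by (simp add: T'_def)
  have mbig: "\<forall>y\<in>T'. y < m"
  proof
    fix y assume "y \<in> T'"
    then have "y \<in> T" "y \<noteq> m" by (auto simp: T'_def)
    then show "y < m" using Max_ge[OF Suc.prems(1)] m_def by force
  qed
  have mpos: "m > 0" using mT Suc.prems(2) by auto
  show ?case
  proof (cases k)
    case 0
    then show ?thesis using ne Suc.hyps(2) by (simp add: WW_zero hh_Suc_0 flip: Suc.hyps(2))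
  next
    case (Suc k')
    have IH1: "WW q T' k' = q^(k'^2) * (1+q)^k' * hh q n k'"
      using Suc.hyps(1)[of T' k'] cn fin' pos' by simp
    have IH2: "WW q T' (Suc k') = q^((Suc k')^2) * (1+q)^(Suc k') * hh q n (Suc k')"
      using Suc.hyps(1)[of T' "Suc k'"] cn fin' pos' by simp
    have st: "WW q T (Suc k') = q^(2*k'+1) * (1+q) * WW q T' k' + (q*(1+q)) * qint (q^2) (Suc k') * WW q T' (Suc k')"
      unfolding Te by (rule WW_step[OF fin' pos' mbig mpos])
    have pw: "q^((Suc k')^2) = q^(k'^2) * q^(2*k'+1)"
    proof -
      have "(Suc k')^2 = k'^2 + (2*k'+1)" by (simp add: power2_eq_square)
      then show ?thesis by (simp add: power_add)
    qed
    have ct: "card T = Suc n" using Suc.hyps(2) by simp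
    have "hh q (card T) (Suc k') = hh q n k' + (qint q 2 * q) * qint (q^2) (Suc k') * hh q n (Suc k')"
      unfolding ct by (rule hh_Suc_Suc)
    then show ?thesis unfolding Suc st IH1 IH2 pw
      by (simp add: qint2 algebra_simps)
  qed
qed



lemma sum_pow_card:
  assumes "finite A"
  shows "(\<Sum>T\<in>Pow A. f (card T)) = (\<Sum>j\<le>card A. of_nat (card A choose j) * (f j :: 'a::comm_ring_1))"
proof -
  have "(\<Sum>T\<in>Pow A. f (card T)) = (\<Sum>j\<le>card A. \<Sum>T\<in>{T. T \<in> Pow A \<and> card T = j}. f (card T))"
    by (rule sum.group[symmetric]) (use assms in \<open>auto intro: card_mono\<close>)
  also have "\<dots> = (\<Sum>j\<le>card A. of_nat (card A choose j) * f j)"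
  proof (rule sum.cong[OF refl])
    fix j
    have "(\<Sum>T\<in>{T. T \<in> Pow A \<and> card T = j}. f (card T)) = (\<Sum>T\<in>{T. T \<in> Pow A \<and> card T = j}. f j)"
      by (rule sum.cong) auto
    also have "\<dots> = of_nat (card {T. T \<subseteq> A \<and> card T = j}) * f j" by simp
    also have "card {T. T \<subseteq> A \<and> card T = j} = card A choose j" by (rule n_subsets[OF assms])
    finally show "(\<Sum>T\<in>{T. T \<in> Pow A \<and> card T = j}. f (card T)) = of_nat (card A choose j) * f j" .
  qed
  finally show ?thesis .
qed

lemma Bset'_uniq: "\<pi> \<in> Bset' T k \<Longrightarrow> \<pi> \<in> Bset' T2 k \<Longrightarrow> T = T2"
  unfolding Bset'_def using SSP'_D(3) by blast

theorem proposition3p3: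
  fixes q :: "'a::field" and n k :: nat
  assumes "k \<le> n"
  shows "qStirlingB q n k =
           (\<Sum>j=k..n. of_nat (n choose j) * qint q 2 ^ (j - k) * q ^ (j - k) * qStirling (q\<^sup>2) j k)
     \<and> (q \<noteq> 0 \<and> qint q 2 \<noteq> 0 \<longrightarrow>
         qStirlingB q n k =
           qStirlingD q n k + of_nat n * qint q 2 ^ (n - k - 1) * q ^ (n - k - 1) * qStirling (q\<^sup>2) (n - 1) k)"
proof
  have gen: "qStirlingB q n k = (\<Sum>j\<le>n. of_nat (n choose j) * hh q j k)" by (rule part1_gen)
  have "(\<Sum>j\<le>n. of_nat (n choose j) * hh q j k) = (\<Sum>j=k..n. of_nat (n choose j) * hh q j k)"
    by (rule sum.mono_neutral_right) (auto simp: hh_def qStirling_zero)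
  also have "\<dots> = (\<Sum>j=k..n. of_nat (n choose j) * qint q 2 ^ (j - k) * q ^ (j - k) * qStirling (q\<^sup>2) j k)"
    by (rule sum.cong) (simp_all add: hh_def power_mult_distrib mult.assoc)
  finally show "qStirlingB q n k =
           (\<Sum>j=k..n. of_nat (n choose j) * qint q 2 ^ (j - k) * q ^ (j - k) * qStirling (q\<^sup>2) j k)"
    using gen by simp
  show "q \<noteq> 0 \<and> qint q 2 \<noteq> 0 \<longrightarrow>
         qStirlingB q n k =
           qStirlingD q n k + of_nat n * qint q 2 ^ (n - k - 1) * q ^ (n - k - 1) * qStirling (q\<^sup>2) (n - 1) k"
  proof
    assume nz: "q \<noteq> 0 \<and> qint q 2 \<noteq> 0"
    define N where "N = {1..int n}"
    define Q where "Q = (\<lambda>i. N - {i}) ` N"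
    define c where "c = q^(k^2) * (1+q)^k"
    have c0: "c \<noteq> 0" using nz by (simp add: c_def qint2)
    have finN: "finite N" by (simp add: N_def)
    have cN: "card N = n" by (simp add: N_def)
    have posN: "\<And>T. T \<subseteq> N \<Longrightarrow> T \<subseteq> {0<..}" by (auto simp: N_def)
    have QP: "Q \<subseteq> Pow N" by (auto simp: Q_def)
    have D: "Dsub n k = (\<Union>T\<in>Pow N - Q. Bset' T k)"
    proof -
      have B1: "Bsub {1..int n} k = (\<Union>T\<in>Pow N. Bset' T k)"
        unfolding Bsub_def N_def[symmetric] using Bset_eq posN by auto
      have B2: "(\<Union>i\<in>{1..int n}. Bset ({1..int n} - {i}) k) = (\<Union>i\<in>N. Bset' (N - {i}) k)"
        unfolding N_def[symmetric] using Bset_eq[of "N - {_}"] posN by auto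
      show ?thesis unfolding Dsub_def B1 B2
      proof
        show "(\<Union>T\<in>Pow N. Bset' T k) - (\<Union>i\<in>N. Bset' (N - {i}) k) \<subseteq> (\<Union>T\<in>Pow N - Q. Bset' T k)"
          by (auto simp: Q_def)
        show "(\<Union>T\<in>Pow N - Q. Bset' T k) \<subseteq> (\<Union>T\<in>Pow N. Bset' T k) - (\<Union>i\<in>N. Bset' (N - {i}) k)"
        proof
          fix \<pi> assume "\<pi> \<in> (\<Union>T\<in>Pow N - Q. Bset' T k)"
          then obtain T where T: "T \<in> Pow N" "T \<notin> Q" "\<pi> \<in> Bset' T k" by auto
          have "\<pi> \<notin> Bset' (N - {i}) k" if "i \<in> N" for i
          proof
            assume "\<pi> \<in> Bset' (N - {i}) k"
            then have "T = N - {i}" using Bset'_uniq T(3) by blast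
            then show False using T(2) that by (auto simp: Q_def)
          qed
          then show "\<pi> \<in> (\<Union>T\<in>Pow N. Bset' T k) - (\<Union>i\<in>N. Bset' (N - {i}) k)" using T by auto
        qed
      qed
    qed
    have finP: "finite (Pow N - Q)" using finN by simp
    have sD: "(\<Sum>\<pi>\<in>Dsub n k. q ^ mstat \<pi>) = (\<Sum>T\<in>Pow N - Q. WW q T k)"
      unfolding D WW_def
    proof (rule sum.UNION_disjoint[OF finP])
      show "\<forall>T\<in>Pow N - Q. finite (Bset' T k)" using finN by (auto intro: Bset'_fin finite_subset)
      show "\<forall>T\<in>Pow N - Q. \<forall>T2\<in>Pow N - Q. T \<noteq> T2 \<longrightarrow> Bset' T k \<inter> Bset' T2 k = {}"
        using Bset'_uniq by blast
    qed
    have WWN: "\<And>T. T \<in> Pow N \<Longrightarrow> WW q T k = c * hh q (card T) k"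
    proof -
      fix T assume "T \<in> Pow N"
      then have "finite T" "T \<subseteq> {0<..}" using finN posN finite_subset by auto
      then show "WW q T k = c * hh q (card T) k" using WW_formula c_def by simp
    qed
    have sAll: "(\<Sum>T\<in>Pow N. WW q T k) = c * qStirlingB q n k"
    proof -
      have "(\<Sum>T\<in>Pow N. WW q T k) = (\<Sum>T\<in>Pow N. c * hh q (card T) k)"
        by (rule sum.cong) (simp_all add: WWN)
      also have "\<dots> = c * (\<Sum>T\<in>Pow N. hh q (card T) k)" by (simp add: sum_distrib_left)
      also have "(\<Sum>T\<in>Pow N. hh q (card T) k) = (\<Sum>j\<le>n. of_nat (n choose j) * hh q j k)"
        using sum_pow_card[OF finN, of "\<lambda>j. hh q j k"] cN by simp
      finally show ?thesis using gen by simp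
    qed
    have sQ: "(\<Sum>T\<in>Q. WW q T k) = of_nat n * (c * hh q (n - 1) k)"
    proof -
      have inj: "inj_on (\<lambda>i. N - {i}) N" by (rule inj_onI) auto
      have "(\<Sum>T\<in>Q. WW q T k) = (\<Sum>i\<in>N. WW q (N - {i}) k)"
        unfolding Q_def by (simp add: sum.reindex[OF inj])
      also have "\<dots> = (\<Sum>i\<in>N. c * hh q (n - 1) k)"
      proof (rule sum.cong[OF refl])
        fix i assume "i \<in> N"
        then have "card (N - {i}) = n - 1" using finN cN by simp
        then show "WW q (N - {i}) k = c * hh q (n - 1) k" using WWN[of "N - {i}"] by simp
      qed
      also have "\<dots> = of_nat n * (c * hh q (n - 1) k)" using cN by simp
      finally show ?thesis .
    qed
    have "(\<Sum>\<pi>\<in>Dsub n k. q ^ mstat \<pi>) = c * qStirlingB q n k - of_nat n * (c * hh q (n - 1) k)"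
    proof -
      have "(\<Sum>T\<in>Pow N - Q. WW q T k) = (\<Sum>T\<in>Pow N. WW q T k) - (\<Sum>T\<in>Q. WW q T k)"
        by (rule sum_diff) (use finN QP in auto)
      then show ?thesis unfolding sD using sAll sQ by simp
    qed
    then have "qStirlingD q n k = (c * qStirlingB q n k - of_nat n * (c * hh q (n - 1) k)) / c"
      by (simp add: qStirlingD_def c_def qint2)
    also have "\<dots> = qStirlingB q n k - of_nat n * hh q (n - 1) k"
      using c0 by (simp add: field_simps)
    finally have "qStirlingB q n k = qStirlingD q n k + of_nat n * hh q (n - 1) k" by simp
    moreover have "hh q (n - 1) k = qint q 2 ^ (n - k - 1) * q ^ (n - k - 1) * qStirling (q\<^sup>2) (n - 1) k"
    proof -
      have "n - 1 - k = n - k - 1" by simp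
      then show ?thesis by (simp add: hh_def power_mult_distrib)
    qed
    ultimately show "qStirlingB q n k =
           qStirlingD q n k + of_nat n * qint q 2 ^ (n - k - 1) * q ^ (n - k - 1) * qStirling (q\<^sup>2) (n - 1) k"
      by (simp add: mult.assoc)
  qed
qed


end
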